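(* Let $\mathsf P=(E,<,\#)$ be a prime event structure and let $\mathcal N(\mathsf P)=\langle S,E,F,I,\emptyset,\mathsf m,\ell\rangle$ be the net with $S=\{(\ast,e)\mid e\in E\}\cup\{(e,\ast)\mid e\in E\}\cup\{(\{e,e'\},\#)\mid e\ \#\ e'\}$, $F=\{(e,(e,\ast))\}_{e\in E}\cup\{((\ast,e),e)\}_{e\in E}\cup\{((W,\#),e)\mid (W,\#)\in S,\ e\in W\}$, $I=\{((\ast,e'),e)\mid e'<e\}$, $\mathsf m=\{(\ast,e)\mid e\in E\}\cup\{(\{e,e'\},\#)\mid e\ \#\ e'\}$, and $\ell$ the identity. Then $\mathcal N(\mathsf P)$ is an occurrence causal net.
   Context: A prime event structure is $\mathsf P=(E,<,\#)$ with $E$ a countable set, $<$ an irreflexive partial order with $\{e'\mid e'<e\}$ finite for each $e$, and $\#$ irreflexive, symmetric and hereditary ($e\ \#\ e'<e''\Rightarrow e\ \#\ e''$). A labelled contextual net $N=\langle S,T,F,I,R,\mathsf m,\ell\rangle$ has disjoint places $S$ and transitions $T$, flow $F\subseteq(S\times T)\cup(T\times S)$, inhibitor arcs $I\subseteq S\times T$, read arcs $R\subseteq S\times T$, initial marking $\mathsf m$, total labelling $\ell:T\to L$; ${}^\bullet x,x^\bullet$ pre/postsets, ${}^\circ t=\{s\mid(s,t)\in I\}$, $\underline t=\{s\mid(s,t)\in R\}$; every transition has nonempty preset; $t$ enabled at $m$ if ${}^\bullet t+\underline t\subseteq m$ and $m(s)=0$ for $s\in{}^\circ t$; firing gives $m-{}^\bullet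 t+t^\bullet$. States are multisets of transitions of finite firing sequences from $\mathsf m$; $\lfloor X\rfloor$ is the support. Nets are assumed safe. $<_N$ is the transitive closure of $F$. $t\prec_N t'$ iff ${}^\bullet t\cap{}^\circ t'\neq\emptyset$ or $t^\bullet\cap\underline{t'}\neq\emptyset$; $t\ \#_N\ t'$ iff no state contains both. Pre-causal: (1) $<_N\cap(T\times T)=\emptyset$, ${}^\bullet t\cap{}^\circ t=\emptyset$, $t^\bullet\cap\underline t=\emptyset$; (2) $|\ell(s^\bullet)|=1$ for $s\in{}^\circ t$; (3) $t\prec_N t'\Rightarrow$ not $t'\prec_N t$; (4) ${}^\circ t\cup\underline t$ finite; (5) $t\ \#_N\ t'\Rightarrow{}^\bullet t\cap{}^\bullet t'\neq\emptyset$; (6) $t\neq t'$, $\ell(t)=\ell(t')\Rightarrow t\ \#_N\ t'$. Causal net: pre-causal with (a) $\prec^*$ restricted to each state's support a partial order and (b) each transition in some state's support. An occurrence causal net is a causal net $K$ with $R=\emptyset$, $\ell$ injective, $\prec_K^{*}$ a partial order on $T$, and $t\ \#_K\ t'\prec_K^{*}t''$ implying $t\ \#_K\ t''$. *)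

theory Defs
  imports "HOL-Library.Multiset" "HOL-Library.Countable_Set"
begin

definition po_on :: "'a set \<Rightarrow> 'a rel \<Rightarrow> bool" where
  "po_on A r \<longleftrightarrow> (\<forall>x\<in>A. (x, x) \<in> r)
     \<and> (\<forall>x\<in>A. \<forall>y\<in>A. \<forall>z\<in>A. (x, y) \<in> r \<and> (y, z) \<in> r \<longrightarrow> (x, z) \<in> r)
     \<and> (\<forall>x\<in>A. \<forall>y\<in>A. (x, y) \<in> r \<and> (y, x) \<in> r \<longrightarrow> x = y)"

definition pes :: "'e set \<Rightarrow> 'e rel \<Rightarrow> 'e rel \<Rightarrow> bool" where
  "pes E lt cf \<longleftrightarrow> countable E
     \<and> lt \<subseteq> E \<times> E \<and> irrefl lt \<and> trans lt
     \<and> (\<forall>e\<in>E. finite {e'. (e', e) \<in> lt})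
     \<and> cf \<subseteq> E \<times> E \<and> irrefl cf \<and> sym cf
     \<and> (\<forall>e e' e''. (e, e') \<in> cf \<and> (e', e'') \<in> lt \<longrightarrow> (e, e'') \<in> cf)"

datatype ('s, 't) node = Pl 's | Tr 't

record ('s, 't, 'l) cnet =
  places :: "'s set"
  trans  :: "'t set"
  flow   :: "(('s, 't) node \<times> ('s, 't) node) set"
  inh    :: "('s \<times> 't) set"
  rd     :: "('s \<times> 't) set"
  m0     :: "'s \<Rightarrow> nat"
  lab    :: "'t \<Rightarrow> 'l"

definition preT :: "('s, 't, 'l) cnet \<Rightarrow> 't \<Rightarrow> 's set" where
  "preT N t = {s. (Pl s, Tr t) \<in> flow N}"
definition postT :: "('s, 't, 'l) cnet \<Rightarrow> 't \<Rightarrow> 's set" where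
  "postT N t = {s. (Tr t, Pl s) \<in> flow N}"
definition postS :: "('s, 't, 'l) cnet \<Rightarrow> 's \<Rightarrow> 't set" where
  "postS N s = {t. (Pl s, Tr t) \<in> flow N}"
definition inhT :: "('s, 't, 'l) cnet \<Rightarrow> 't \<Rightarrow> 's set" where
  "inhT N t = {s. (s, t) \<in> inh N}"
definition rdT :: "('s, 't, 'l) cnet \<Rightarrow> 't \<Rightarrow> 's set" where
  "rdT N t = {s. (s, t) \<in> rd N}"

definition enabled :: "('s, 't, 'l) cnet \<Rightarrow> ('s \<Rightarrow> nat) \<Rightarrow> 't \<Rightarrow> bool" where
  "enabled N m t \<longleftrightarrow>
     (\<forall>s. of_bool (s \<in> preT N t) + of_bool (s \<in> rdT N t) \<le> m s)
     \<and> (\<forall>s\<in>inhT N t. m s = 0)"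

definition fire :: "('s, 't, 'l) cnet \<Rightarrow> ('s \<Rightarrow> nat) \<Rightarrow> 't \<Rightarrow> ('s \<Rightarrow> nat)" where
  "fire N m t = (\<lambda>s. m s - of_bool (s \<in> preT N t) + of_bool (s \<in> postT N t))"

fun run :: "('s, 't, 'l) cnet \<Rightarrow> ('s \<Rightarrow> nat) \<Rightarrow> 't list \<Rightarrow> ('s \<Rightarrow> nat) option" where
  "run N m [] = Some m"
| "run N m (t # ts) =
     (if t \<in> trans N \<and> enabled N m t then run N (fire N m t) ts else None)"

definition states :: "('s, 't, 'l) cnet \<Rightarrow> 't multiset set" where
  "states N = {mset ts | ts. run N (m0 N) ts \<noteq> None}"

definition reachable :: "('s, 't, 'l) cnet \<Rightarrow> ('s \<Rightarrow> nat) set" where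
  "reachable N = {m. \<exists>ts. run N (m0 N) ts = Some m}"

definition safe :: "('s, 't, 'l) cnet \<Rightarrow> bool" where
  "safe N \<longleftrightarrow> (\<forall>m\<in>reachable N. \<forall>s. m s \<le> 1)"

definition contextual_net :: "('s, 't, 'l) cnet \<Rightarrow> bool" where
  "contextual_net N \<longleftrightarrow>
     flow N \<subseteq> (Pl ` places N \<times> Tr ` trans N) \<union> (Tr ` trans N \<times> Pl ` places N)
     \<and> inh N \<subseteq> places N \<times> trans N
     \<and> rd N \<subseteq> places N \<times> trans N
     \<and> (\<forall>s. m0 N s > 0 \<longrightarrow> s \<in> places N)
     \<and> (\<forall>t\<in>trans N. preT N t \<noteq> {})
     \<and> safe N"

definition prec :: "('s, 't, 'l) cnet \<Rightarrow> 't \<Rightarrow> 't \<Rightarrow> bool" where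
  "prec N t t' \<longleftrightarrow> preT N t \<inter> inhT N t' \<noteq> {} \<or> postT N t \<inter> rdT N t' \<noteq> {}"

definition prec_rel :: "('s, 't, 'l) cnet \<Rightarrow> 't rel" where
  "prec_rel N = {(t, t'). t \<in> trans N \<and> t' \<in> trans N \<and> prec N t t'}"

definition conflict :: "('s, 't, 'l) cnet \<Rightarrow> 't \<Rightarrow> 't \<Rightarrow> bool" where
  "conflict N t t' \<longleftrightarrow> \<not> (\<exists>X\<in>states N. t \<in># X \<and> t' \<in># X)"

definition pre_causal :: "('s, 't, 'l) cnet \<Rightarrow> bool" where
  "pre_causal N \<longleftrightarrow> contextual_net N
     \<and> (\<forall>t t'. (Tr t, Tr t') \<notin> (flow N)\<^sup>+)
     \<and> (\<forall>t\<in>trans N. preT N t \<inter> inhT N t = {} \<and> postT N t \<inter> rdT N t = {})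
     \<and> (\<forall>t\<in>trans N. \<forall>s\<in>inhT N t. card (lab N ` postS N s) = 1)
     \<and> (\<forall>t\<in>trans N. \<forall>t'\<in>trans N. prec N t t' \<longrightarrow> \<not> prec N t' t)
     \<and> (\<forall>t\<in>trans N. finite (inhT N t \<union> rdT N t))
     \<and> (\<forall>t\<in>trans N. \<forall>t'\<in>trans N. conflict N t t' \<longrightarrow> preT N t \<inter> preT N t' \<noteq> {})
     \<and> (\<forall>t\<in>trans N. \<forall>t'\<in>trans N. t \<noteq> t' \<and> lab N t = lab N t' \<longrightarrow> conflict N t t')"

definition causal_net :: "('s, 't, 'l) cnet \<Rightarrow> bool" where
  "causal_net N \<longleftrightarrow> pre_causal N
     \<and> (\<forall>X\<in>states N. po_on (set_mset X)
          ((prec_rel N \<inter> (set_mset X \<times> set_mset X))\<^sup>*))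
     \<and> (\<forall>t\<in>trans N. \<exists>X\<in>states N. t \<in># X)"

definition occurrence_causal_net :: "('s, 't, 'l) cnet \<Rightarrow> bool" where
  "occurrence_causal_net N \<longleftrightarrow> causal_net N
     \<and> rd N = {}
     \<and> inj_on (lab N) (trans N)
     \<and> po_on (trans N) ((prec_rel N)\<^sup>*)
     \<and> (\<forall>t\<in>trans N. \<forall>t'\<in>trans N. \<forall>t''\<in>trans N.
          conflict N t t' \<and> (t', t'') \<in> (prec_rel N)\<^sup>* \<longrightarrow> conflict N t t'')"

text \<open>SE e is the place (*,e), ES e is (e,*), CF W is (W,#).\<close>
datatype 'e pplace = SE 'e | ES 'e | CF "'e set"

definition net_of_pes :: "'e set \<Rightarrow> 'e rel \<Rightarrow> 'e rel \<Rightarrow> ('e pplace, 'e, 'e) cnet" where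
  "net_of_pes E lt cf =
     (let S = {SE e | e. e \<in> E} \<union> {ES e | e. e \<in> E} \<union> {CF {e, e'} | e e'. (e, e') \<in> cf};
          M = {SE e | e. e \<in> E} \<union> {CF {e, e'} | e e'. (e, e') \<in> cf}
      in \<lparr> places = S,
           trans = E,
           flow = {(Tr e, Pl (ES e)) | e. e \<in> E}
                  \<union> {(Pl (SE e), Tr e) | e. e \<in> E}
                  \<union> {(Pl (CF W), Tr e) | W e. CF W \<in> S \<and> e \<in> W},
           inh = {(SE e', e) | e' e. (e', e) \<in> lt},
           rd = {},
           m0 = (\<lambda>s. if s \<in> M then 1 else 0),
           lab = id \<rparr>)"

end

theory Submission
  imports Defs
begin

lemma run_append:
  "run N' m (xs @ ys) = (case run N' m xs of None \<Rightarrow> None | Some m' \<Rightarrow> run N' m' ys)"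
  by (induction xs arbitrary: m) auto

locale PP =
  fixes E :: "'e set" and lt cf :: "'e rel"
  assumes pes: "pes E lt cf"
begin

abbreviation "N \<equiv> net_of_pes E lt cf"

definition "cfp = {{e, e'} | e e'. (e, e') \<in> cf}"

definition mk :: "'e set \<Rightarrow> 'e pplace \<Rightarrow> nat" where
  "mk A s = (case s of SE e \<Rightarrow> of_bool (e \<in> E \<and> e \<notin> A)
                     | ES e \<Rightarrow> of_bool (e \<in> A)
                     | CF W \<Rightarrow> of_bool (W \<in> cfp \<and> W \<inter> A = {}))"

definition "cfree A \<longleftrightarrow> (\<forall>e\<in>A. \<forall>e'\<in>A. (e, e') \<notin> cf)"

lemma pesD: "countable E" "lt \<subseteq> E \<times> E" "irrefl lt" "Relation.trans lt"
     "\<forall>e\<in>E. finite {e'. (e', e) \<in> lt}"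
     "cf \<subseteq> E \<times> E" "irrefl cf" "sym cf"
     "\<forall>e e' e''. (e, e') \<in> cf \<and> (e', e'') \<in> lt \<longrightarrow> (e, e'') \<in> cf"
  using pes unfolding pes_def by simp_all

lemma ltE: "lt \<subseteq> E \<times> E" using pesD by simp
lemma lt_irr: "(x,x) \<notin> lt" using pesD(3) by (simp add: irrefl_def)
lemma lt_trans: "(x,y) \<in> lt \<Longrightarrow> (y,z) \<in> lt \<Longrightarrow> (x,z) \<in> lt"
  using pesD(4) by (rule transD)
lemma lt_fin: "e \<in> E \<Longrightarrow> finite {e'. (e', e) \<in> lt}" using pesD(5) by simp
lemma cfE: "cf \<subseteq> E \<times> E" using pesD by simp
lemma cf_irr: "(x,x) \<notin> cf" using pesD(7) by (simp add: irrefl_def)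
lemma cf_sym: "(x,y) \<in> cf \<Longrightarrow> (y,x) \<in> cf" using pesD(8) by (rule symD)
lemma cf_her: "(x,y) \<in> cf \<Longrightarrow> (y,z) \<in> lt \<Longrightarrow> (x,z) \<in> cf" using pesD(9) by blast

lemma cfp_E: "W \<in> cfp \<Longrightarrow> W \<subseteq> E"
  using cfE unfolding cfp_def by auto

lemma trans_N[simp]: "trans N = E" and rd_N[simp]: "rd N = {}" and lab_N[simp]: "lab N = id"
  by (simp_all add: net_of_pes_def Let_def)

lemma places_N: "places N = SE ` E \<union> ES ` E \<union> CF ` cfp"
  by (auto simp: net_of_pes_def Let_def cfp_def)

lemma flow_N: "flow N = {(Tr e, Pl (ES e)) | e. e \<in> E}
                  \<union> {(Pl (SE e), Tr e) | e. e \<in> E}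
                  \<union> {(Pl (CF W), Tr e) | W e. W \<in> cfp \<and> e \<in> W}"
  by (auto simp: net_of_pes_def Let_def cfp_def)

lemma inh_N: "inh N = {(SE e', e) | e' e. (e', e) \<in> lt}"
  by (simp add: net_of_pes_def Let_def)

lemma m0_N: "m0 N = mk {}"
  by (auto simp: net_of_pes_def Let_def mk_def cfp_def split: pplace.split)

lemma preT_N: "preT N t = (if t \<in> E then {SE t} else {}) \<union> CF ` {W \<in> cfp. t \<in> W}"
  by (auto simp: preT_def flow_N)

lemma postT_N: "postT N t = (if t \<in> E then {ES t} else {})"
  by (auto simp: postT_def flow_N)

lemma inhT_N: "inhT N t = SE ` {e. (e, t) \<in> lt}"
  by (auto simp: inhT_def inh_N)

lemma rdT_N[simp]: "rdT N t = {}"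
  by (simp add: rdT_def)

lemma postS_SE: "postS N (SE e) = (if e \<in> E then {e} else {})"
  by (auto simp: postS_def flow_N)

lemma of_bool_ge1[simp]: "(Suc 0 \<le> (of_bool P::nat)) = P" "(1 \<le> (of_bool P::nat)) = P"
  by (cases P; simp)+

lemma cfp_iff: "W \<in> cfp \<longleftrightarrow> (\<exists>e e'. W = {e, e'} \<and> (e, e') \<in> cf)"
  by (auto simp: cfp_def)

lemma enabled_mk:
  assumes t: "t \<in> E" and A: "A \<subseteq> E"
  shows "enabled N (mk A) t \<longleftrightarrow> t \<notin> A \<and> (\<forall>e'. (t, e') \<in> cf \<longrightarrow> e' \<notin> A)
           \<and> (\<forall>e'. (e', t) \<in> lt \<longrightarrow> e' \<in> A)"
proof
  assume en: "enabled N (mk A) t"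
  have pre: "\<And>s. s \<in> preT N t \<Longrightarrow> 1 \<le> mk A s"
  proof -
    fix s assume "s \<in> preT N t"
    moreover have "of_bool (s \<in> preT N t) + of_bool (s \<in> rdT N t) \<le> mk A s"
      using en unfolding enabled_def by blast
    ultimately show "1 \<le> mk A s" by simp
  qed
  have inh: "\<And>s. s \<in> inhT N t \<Longrightarrow> mk A s = 0"
    using en unfolding enabled_def by blast
  have "t \<notin> A" using pre[of "SE t"] t by (simp add: preT_N mk_def)
  moreover have "e' \<notin> A" if "(t, e') \<in> cf" for e'
  proof -
    have "{t, e'} \<in> cfp" using that by (auto simp: cfp_def)
    then have "CF {t, e'} \<in> preT N t" by (simp add: preT_N)
    then show ?thesis using pre[of "CF {t, e'}"] by (simp add: mk_def)
  qed
  moreover have "e' \<in> A" if "(e', t) \<in> lt" for e'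
  proof -
    have "SE e' \<in> inhT N t" using that by (simp add: inhT_N)
    moreover have "e' \<in> E" using that ltE by auto
    ultimately show ?thesis using inh[of "SE e'"] by (simp add: mk_def)
  qed
  ultimately show "t \<notin> A \<and> (\<forall>e'. (t, e') \<in> cf \<longrightarrow> e' \<notin> A) \<and> (\<forall>e'. (e', t) \<in> lt \<longrightarrow> e' \<in> A)"
    by blast
next
  assume H: "t \<notin> A \<and> (\<forall>e'. (t, e') \<in> cf \<longrightarrow> e' \<notin> A) \<and> (\<forall>e'. (e', t) \<in> lt \<longrightarrow> e' \<in> A)"
  have "of_bool (s \<in> preT N t) \<le> mk A s" for s
  proof (cases "s \<in> preT N t")
    case True
    then consider "s = SE t" | W where "s = CF W" "W \<in> cfp" "t \<in> W"
      by (auto simp: preT_N t)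
    then show ?thesis
    proof cases
      case 1 then show ?thesis using H t by (simp add: mk_def)
    next
      case 2
      then obtain e e' where W: "W = {e, e'}" "(e, e') \<in> cf" by (auto simp: cfp_def)
      have "W \<inter> A = {}"
      proof -
        have "t = e \<or> t = e'" using 2 W by auto
        then have "(t, e) \<in> cf \<or> t = e" "(t, e') \<in> cf \<or> t = e'" using W(2) cf_sym by auto
        then show ?thesis using H W by auto
      qed
      then show ?thesis using 2 by (simp add: mk_def)
    qed
  qed simp
  moreover have "mk A s = 0" if "s \<in> inhT N t" for s
    using that H by (auto simp: inhT_N mk_def)
  ultimately show "enabled N (mk A) t" unfolding enabled_def by simp
qed

lemma fire_mk:
  assumes t: "t \<in> E" and A: "A \<subseteq> E" and en: "enabled N (mk A) t"
  shows "fire N (mk A) t = mk (insert t A)"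
proof
  fix s
  have H: "t \<notin> A" "\<And>e'. (t, e') \<in> cf \<Longrightarrow> e' \<notin> A"
    using en enabled_mk[OF t A] by auto
  show "fire N (mk A) t s = mk (insert t A) s"
  proof (cases s)
    case (SE e) then show ?thesis using t H by (auto simp: fire_def preT_N postT_N mk_def)
  next
    case (ES e) then show ?thesis using t H by (auto simp: fire_def preT_N postT_N mk_def)
  next
    case (CF W)
    show ?thesis
    proof (cases "W \<in> cfp \<and> t \<in> W")
      case True
      then obtain e e' where W: "W = {e, e'}" "(e, e') \<in> cf" by (auto simp: cfp_def)
      have "W \<inter> A = {}"
      proof -
        have "t = e \<or> t = e'" using True W by auto
        then have "(t, e) \<in> cf \<or> t = e" "(t, e') \<in> cf \<or> t = e'" using W(2) cf_sym by auto
        then show ?thesis using H W by auto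
      qed
      then show ?thesis using True CF by (auto simp: fire_def preT_N postT_N mk_def)
    next
      case False
      then show ?thesis using CF by (auto simp: fire_def preT_N postT_N mk_def)
    qed
  qed
qed

definition "downclosed C \<longleftrightarrow> (\<forall>e\<in>C. \<forall>e'. (e', e) \<in> lt \<longrightarrow> e' \<in> C)"

lemma run_inv:
  "A \<subseteq> E \<Longrightarrow> cfree A \<Longrightarrow> run N (mk A) ts = Some m \<Longrightarrow>
    m = mk (A \<union> set ts) \<and> distinct ts \<and> set ts \<inter> A = {} \<and> set ts \<subseteq> E \<and> cfree (A \<union> set ts)"
proof (induction ts arbitrary: A)
  case Nil
  then show ?case by simp
next
  case (Cons t ts)
  from Cons.prems(3) have t: "t \<in> E" and en: "enabled N (mk A) t"
    and r: "run N (fire N (mk A) t) ts = Some m"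
    by (auto split: if_splits)
  have H: "t \<notin> A" "\<And>e'. (t, e') \<in> cf \<Longrightarrow> e' \<notin> A"
    using en enabled_mk[OF t Cons.prems(1)] by auto
  have f: "fire N (mk A) t = mk (insert t A)" using fire_mk[OF t Cons.prems(1) en] .
  have A': "insert t A \<subseteq> E" using t Cons.prems(1) by auto
  have cf': "cfree (insert t A)"
    using Cons.prems(2) H cf_sym cf_irr unfolding cfree_def by blast
  have IH: "m = mk (insert t A \<union> set ts) \<and> distinct ts \<and> set ts \<inter> insert t A = {} \<and> set ts \<subseteq> E
      \<and> cfree (insert t A \<union> set ts)"
    using Cons.IH[OF A' cf'] r f by simp
  then show ?case using H t by auto
qed

lemma maximal:
  "finite C \<Longrightarrow> C \<noteq> {} \<Longrightarrow> \<exists>m\<in>C. \<forall>e\<in>C. (m, e) \<notin> lt"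
proof (induction C rule: finite_induct)
  case empty
  then show ?case by simp
next
  case (insert x F)
  show ?case
  proof (cases "F = {}")
    case True
    then show ?thesis using lt_irr by auto
  next
    case False
    then obtain m where m: "m \<in> F" "\<forall>e\<in>F. (m, e) \<notin> lt" using insert.IH by blast
    show ?thesis
    proof (cases "(m, x) \<in> lt")
      case True
      have "\<forall>e\<in>insert x F. (x, e) \<notin> lt"
        using m True lt_irr lt_trans by blast
      then show ?thesis by blast
    next
      case False
      then show ?thesis using m by blast
    qed
  qed
qed

lemma run_exists:
  "finite C \<Longrightarrow> C \<subseteq> E \<Longrightarrow> downclosed C \<Longrightarrow> cfree C \<Longrightarrow>
    \<exists>ts. run N (mk {}) ts = Some (mk C) \<and> set ts = C"
proof (induction "card C" arbitrary: C)
  case 0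
  then have "C = {}" by simp
  then show ?case by (intro exI[of _ "[]"]) simp
next
  case (Suc n)
  then have "C \<noteq> {}" by auto
  then obtain m where m: "m \<in> C" "\<forall>e\<in>C. (m, e) \<notin> lt" using maximal Suc.prems(1) by blast
  define C' where "C' = C - {m}"
  have c: "n = card C'" using Suc.hyps(2) Suc.prems(1) m(1) by (simp add: C'_def)
  have fin: "finite C'" using Suc.prems(1) by (simp add: C'_def)
  have sub: "C' \<subseteq> E" using Suc.prems(2) by (auto simp: C'_def)
  have dc: "downclosed C'"
    using Suc.prems(3) m(2) unfolding downclosed_def C'_def by blast
  have cfr: "cfree C'" using Suc.prems(4) unfolding cfree_def C'_def by blast
  obtain ts where ts: "run N (mk {}) ts = Some (mk C')" "set ts = C'"
    using Suc.hyps(1)[OF c fin sub dc cfr] by blast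
  have mE: "m \<in> E" using m(1) Suc.prems(2) by auto
  have en: "enabled N (mk C') m"
  proof -
    have "m \<notin> C'" by (simp add: C'_def)
    moreover have "\<forall>e'. (m, e') \<in> cf \<longrightarrow> e' \<notin> C'"
      using Suc.prems(4) m(1) unfolding cfree_def C'_def by blast
    moreover have "\<forall>e'. (e', m) \<in> lt \<longrightarrow> e' \<in> C'"
      using Suc.prems(3) m(1) lt_irr unfolding downclosed_def C'_def by blast
    ultimately show ?thesis using enabled_mk[OF mE sub] by blast
  qed
  have "run N (mk {}) (ts @ [m]) = Some (mk (insert m C'))"
    using ts(1) en mE fire_mk[OF mE sub en] by (simp add: run_append)
  moreover have "insert m C' = C" using m(1) by (auto simp: C'_def)
  ultimately show ?case using ts(2) by (intro exI[of _ "ts @ [m]"]) auto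
qed

lemma cfree_empty[simp]: "cfree {}" by (simp add: cfree_def)

lemma cf_conflict:
  assumes "(t, t') \<in> cf" shows "conflict N t t'"
  unfolding conflict_def
proof
  assume "\<exists>X\<in>states N. t \<in># X \<and> t' \<in># X"
  then obtain ts m where ts: "run N (mk {}) ts = Some m" "t \<in> set ts" "t' \<in> set ts"
    by (auto simp: states_def m0_N)
  then have "cfree (set ts)" using run_inv[of "{}" ts m] by simp
  then show False using ts assms unfolding cfree_def by blast
qed

definition "dn x = insert x {e. (e, x) \<in> lt}"

lemma cf_up:
  assumes "(a, b) \<in> cf" "a \<in> dn x" "b \<in> dn y" shows "(x, y) \<in> cf"
proof -
  have "(a, y) \<in> cf" using assms cf_her unfolding dn_def by auto
  then have "(y, a) \<in> cf" by (rule cf_sym)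
  then have "(y, x) \<in> cf" using assms cf_her unfolding dn_def by auto
  then show ?thesis by (rule cf_sym)
qed

lemma not_cf_state:
  assumes t: "t \<in> E" and t': "t' \<in> E" and ncf: "(t, t') \<notin> cf"
  shows "\<exists>X\<in>states N. t \<in># X \<and> t' \<in># X"
proof -
  define C where "C = dn t \<union> dn t'"
  have fin: "finite C" using lt_fin t t' by (simp add: C_def dn_def)
  have sub: "C \<subseteq> E" using t t' ltE by (auto simp: C_def dn_def)
  have dc: "downclosed C" using lt_trans unfolding downclosed_def C_def dn_def by blast
  have cfr: "cfree C"
    unfolding cfree_def
  proof (intro ballI)
    fix a b assume a: "a \<in> C" and b: "b \<in> C"
    show "(a, b) \<notin> cf"
    proof
      assume ab: "(a, b) \<in> cf"
      have "\<exists>x\<in>{t, t'}. \<exists>y\<in>{t, t'}. (x, y) \<in> cf"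
        using a b cf_up[OF ab] unfolding C_def by blast
      then show False using ncf cf_irr cf_sym by blast
    qed
  qed
  obtain ts where ts: "run N (mk {}) ts = Some (mk C)" "set ts = C"
    using run_exists[OF fin sub dc cfr] by blast
  have "mset ts \<in> states N" using ts(1) by (auto simp: states_def m0_N)
  moreover have "t \<in># mset ts" "t' \<in># mset ts" using ts(2) by (auto simp: C_def dn_def)
  ultimately show ?thesis by blast
qed

lemma conflict_iff:
  "t \<in> E \<Longrightarrow> t' \<in> E \<Longrightarrow> conflict N t t' \<longleftrightarrow> (t, t') \<in> cf"
proof
  assume "t \<in> E" "t' \<in> E" "conflict N t t'"
  then show "(t, t') \<in> cf" using not_cf_state unfolding conflict_def by metis
next
  assume "(t, t') \<in> cf" then show "conflict N t t'" by (rule cf_conflict)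
qed

lemma prec_iff: "t \<in> E \<Longrightarrow> prec N t t' \<longleftrightarrow> (t, t') \<in> lt"
  by (auto simp: prec_def preT_N inhT_N)

lemma prec_rel_sub: "prec_rel N \<subseteq> lt"
  using prec_iff by (auto simp: prec_rel_def)

lemma rtr_lt: "(x, y) \<in> R\<^sup>* \<Longrightarrow> R \<subseteq> lt \<Longrightarrow> x = y \<or> (x, y) \<in> lt"
  by (induction rule: rtrancl_induct) (auto intro: lt_trans)

lemma po_sub: "R \<subseteq> lt \<Longrightarrow> po_on A (R\<^sup>*)"
proof -
  assume R: "R \<subseteq> lt"
  have "(x, y) \<in> R\<^sup>* \<Longrightarrow> (y, x) \<in> R\<^sup>* \<Longrightarrow> x = y" for x y
  proof (rule ccontr)
    assume "(x, y) \<in> R\<^sup>*" "(y, x) \<in> R\<^sup>*" "x \<noteq> y"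
    then have "(x, y) \<in> lt" "(y, x) \<in> lt" using rtr_lt[OF _ R] by blast+
    then show False using lt_trans lt_irr by blast
  qed
  then show ?thesis unfolding po_on_def by auto
qed

lemma mk_le1: "mk A s \<le> 1"
  by (cases s) (simp_all add: mk_def)

lemma safe_N: "safe N"
  unfolding safe_def reachable_def
proof (intro ballI allI)
  fix m s assume "m \<in> {m. \<exists>ts. run N (m0 N) ts = Some m}"
  then obtain ts where "run N (mk {}) ts = Some m" by (auto simp: m0_N)
  then have "m = mk (set ts)" using run_inv[of "{}" ts m] by simp
  then show "m s \<le> 1" using mk_le1 by simp
qed

lemma contextual_N: "contextual_net N"
  unfolding contextual_net_def
proof (intro conjI)
  show "flow N \<subseteq> Pl ` places N \<times> Tr ` cnet.trans N \<union> Tr ` cnet.trans N \<times> Pl ` places N"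
    using cfp_E by (auto simp: flow_N places_N)
  show "inh N \<subseteq> places N \<times> cnet.trans N"
    using ltE by (auto simp: inh_N places_N)
  show "rd N \<subseteq> places N \<times> cnet.trans N" by simp
  show "\<forall>s. 0 < m0 N s \<longrightarrow> s \<in> places N"
  proof (intro allI impI)
    fix s assume "0 < m0 N s"
    then show "s \<in> places N" by (cases s) (auto simp: m0_N mk_def places_N)
  qed
  show "\<forall>t\<in>cnet.trans N. preT N t \<noteq> {}" by (simp add: preT_N)
  show "safe N" by (rule safe_N)
qed

lemma flow_trancl: "(x, y) \<in> (flow N)\<^sup>+ \<Longrightarrow> x = Tr t \<Longrightarrow> y = Pl (ES t)"
proof (induction rule: trancl_induct)
  case (base y)
  then show ?case by (auto simp: flow_N)
next
  case (step y z)
  then show ?case by (auto simp: flow_N)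
qed

lemma pre_causal_N: "pre_causal N"
  unfolding pre_causal_def
proof (intro conjI)
  show "contextual_net N" by (rule contextual_N)
  show "\<forall>t t'. (Tr t, Tr t') \<notin> (flow N)\<^sup>+" using flow_trancl by blast
  show "\<forall>t\<in>cnet.trans N. preT N t \<inter> inhT N t = {} \<and> postT N t \<inter> rdT N t = {}"
    using lt_irr by (auto simp: preT_N inhT_N)
  show "\<forall>t\<in>cnet.trans N. \<forall>s\<in>inhT N t. card (lab N ` postS N s) = 1"
  proof (intro ballI)
    fix t s assume "t \<in> cnet.trans N" "s \<in> inhT N t"
    then obtain e' where "s = SE e'" "(e', t) \<in> lt" by (auto simp: inhT_N)
    then have "e' \<in> E" "s = SE e'" using ltE by auto
    then show "card (lab N ` postS N s) = 1" by (simp add: postS_SE)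
  qed
  show "\<forall>t\<in>cnet.trans N. \<forall>t'\<in>cnet.trans N. prec N t t' \<longrightarrow> \<not> prec N t' t"
    using prec_iff lt_trans lt_irr by (metis trans_N)
  show "\<forall>t\<in>cnet.trans N. finite (inhT N t \<union> rdT N t)"
    using lt_fin by (simp add: inhT_N)
  show "\<forall>t\<in>cnet.trans N. \<forall>t'\<in>cnet.trans N. conflict N t t' \<longrightarrow> preT N t \<inter> preT N t' \<noteq> {}"
  proof (intro ballI impI)
    fix t t' assume "t \<in> cnet.trans N" "t' \<in> cnet.trans N" "conflict N t t'"
    then have "(t, t') \<in> cf" using conflict_iff by simp
    then have "{t, t'} \<in> cfp" by (auto simp: cfp_def)
    then have "CF {t, t'} \<in> preT N t \<inter> preT N t'" by (simp add: preT_N)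
    then show "preT N t \<inter> preT N t' \<noteq> {}" by blast
  qed
  show "\<forall>t\<in>cnet.trans N. \<forall>t'\<in>cnet.trans N. t \<noteq> t' \<and> lab N t = lab N t' \<longrightarrow> conflict N t t'"
    by simp
qed

lemma causal_N: "causal_net N"
  unfolding causal_net_def
proof (intro conjI ballI)
  show "pre_causal N" by (rule pre_causal_N)
  fix X
  show "po_on (set_mset X) ((prec_rel N \<inter> set_mset X \<times> set_mset X)\<^sup>*)"
    by (rule po_sub) (use prec_rel_sub in blast)
next
  fix t assume "t \<in> cnet.trans N"
  then show "\<exists>X\<in>states N. t \<in># X" using not_cf_state[of t t] cf_irr by auto
qed

lemma occ_N: "occurrence_causal_net N"
  unfolding occurrence_causal_net_def
proof (intro conjI)
  show "causal_net N" by (rule causal_N)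
  show "rd N = {}" by simp
  show "inj_on (lab N) (cnet.trans N)" by simp
  show "po_on (cnet.trans N) ((prec_rel N)\<^sup>*)" by (rule po_sub[OF prec_rel_sub])
  show "\<forall>t\<in>cnet.trans N. \<forall>t'\<in>cnet.trans N. \<forall>t''\<in>cnet.trans N.
          conflict N t t' \<and> (t', t'') \<in> (prec_rel N)\<^sup>* \<longrightarrow> conflict N t t''"
  proof (intro ballI impI)
    fix t t' t'' assume t: "t \<in> cnet.trans N" "t' \<in> cnet.trans N" "t'' \<in> cnet.trans N"
      and H: "conflict N t t' \<and> (t', t'') \<in> (prec_rel N)\<^sup>*"
    then have c: "(t, t') \<in> cf" using conflict_iff by simp
    have "t' = t'' \<or> (t', t'') \<in> lt" using H rtr_lt[OF _ prec_rel_sub] by blast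
    then have "(t, t'') \<in> cf" using c cf_her by blast
    then show "conflict N t t''" by (rule cf_conflict)
  qed
qed

end

theorem mainTheorem13:
  fixes E :: "'e set" and lt cf :: "'e rel"
  assumes "pes E lt cf"
  shows "occurrence_causal_net (net_of_pes E lt cf)"
proof -
  interpret PP E lt cf by unfold_locales (rule assms)
  show ?thesis by (rule occ_N)
qed

end
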